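(* For the asynchronous Sinkhorn iteration described in the context, initialized with $v^{(0)}=1_Y$ (all ones), and any $q_{\mathrm{target}}\in(0,1)$, there exists $n\le 2+\frac{C}{\varepsilon(1-q_{\mathrm{target}})}$ with $q^{(n)}\ge q_{\mathrm{target}}$, where $C=\max_{x,y}c(x,y)$. Moreover, $\langle u^{(\ell)},\mu\rangle\le\exp(C/\varepsilon)$ for all $\ell\ge1$.
   Context: $X,Y$ finite sets, $\mu\in\mathcal P(X)$, $\nu\in\mathcal P(Y)$ with strictly positive entries, $c\in\mathbb R_+^{X\times Y}$, $\varepsilon>0$, kernel $K(x,y)=\exp(-c(x,y)/\varepsilon)\mu(x)\nu(y)$. Asynchronous Sinkhorn iteration: given $v^{(0)}\in\mathbb R_{++}^Y$, for $\ell\ge0$: $u^{(\ell+1)}=\mu\oslash(Kv^{(\ell)})$, $\hat v^{(\ell+1)}=\nu\oslash(K^\top u^{(\ell+1)})$, $v^{(\ell+1)}=\min\{v^{(\ell)},\hat v^{(\ell+1)}\}$ componentwise, $\pi^{(\ell+1)}=\mathrm{diag}(u^{(\ell+1)})K\mathrm{diag}(v^{(\ell+1)})$, $q^{(\ell+1)}=\sum_{x,y}\pi^{(\ell+1)}(x,y)$; $\oslash$ is componentwise division. *)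

theory Defs
  imports Complex_Main
begin

definition sk_kernel :: "real \<Rightarrow> ('x \<Rightarrow> 'y \<Rightarrow> real) \<Rightarrow> ('x \<Rightarrow> real) \<Rightarrow> ('y \<Rightarrow> real) \<Rightarrow> 'x \<Rightarrow> 'y \<Rightarrow> real" where
  "sk_kernel eps c mu nu x y = exp (- c x y / eps) * mu x * nu y"

definition u_step :: "('x::finite \<Rightarrow> 'y::finite \<Rightarrow> real) \<Rightarrow> ('x \<Rightarrow> real) \<Rightarrow> ('y \<Rightarrow> real) \<Rightarrow> 'x \<Rightarrow> real" where
  "u_step K mu v = (\<lambda>x. mu x / (\<Sum>y\<in>UNIV. K x y * v y))"

definition v_step :: "('x::finite \<Rightarrow> 'y::finite \<Rightarrow> real) \<Rightarrow> ('y \<Rightarrow> real) \<Rightarrow> ('x \<Rightarrow> real) \<Rightarrow> 'y \<Rightarrow> real" where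
  "v_step K nu u = (\<lambda>y. nu y / (\<Sum>x\<in>UNIV. K x y * u x))"

fun async_v :: "('x::finite \<Rightarrow> 'y::finite \<Rightarrow> real) \<Rightarrow> ('x \<Rightarrow> real) \<Rightarrow> ('y \<Rightarrow> real) \<Rightarrow> nat \<Rightarrow> 'y \<Rightarrow> real" where
  "async_v K mu nu 0 = (\<lambda>_. 1)"
| "async_v K mu nu (Suc l) =
     (\<lambda>y. min (async_v K mu nu l y) (v_step K nu (u_step K mu (async_v K mu nu l)) y))"

text \<open>u^(l) for l \<ge> 1: u^(l+1) = mu ./ (K v^(l)). (Value at l = 0 is meaningless.)\<close>
definition async_u :: "('x::finite \<Rightarrow> 'y::finite \<Rightarrow> real) \<Rightarrow> ('x \<Rightarrow> real) \<Rightarrow> ('y \<Rightarrow> real) \<Rightarrow> nat \<Rightarrow> 'x \<Rightarrow> real" where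
  "async_u K mu nu l = u_step K mu (async_v K mu nu (l - 1))"

text \<open>q^(l) = total mass of pi^(l) = diag(u^(l)) K diag(v^(l)), for l \<ge> 1.\<close>
definition async_q :: "('x::finite \<Rightarrow> 'y::finite \<Rightarrow> real) \<Rightarrow> ('x \<Rightarrow> real) \<Rightarrow> ('y \<Rightarrow> real) \<Rightarrow> nat \<Rightarrow> real" where
  "async_q K mu nu l = (\<Sum>x\<in>UNIV. \<Sum>y\<in>UNIV. async_u K mu nu l x * K x y * async_v K mu nu l y)"

end

theory Submission imports Defs begin

locale sk =
  fixes K :: "'x::finite \<Rightarrow> 'y::finite \<Rightarrow> real" and mu :: "'x \<Rightarrow> real"
    and nu :: "'y \<Rightarrow> real" and e :: real
  assumes mu_pos: "\<And>x. mu x > 0" and mu_sum: "(\<Sum>x\<in>UNIV. mu x) = 1"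
    and nu_pos: "\<And>y. nu y > 0" and nu_sum: "(\<Sum>y\<in>UNIV. nu y) = 1"
    and e_pos: "e > 0"
    and K_lo: "\<And>x y. e * mu x * nu y \<le> K x y"
    and K_hi: "\<And>x y. K x y \<le> mu x * nu y"
begin

definition V where "V l = async_v K mu nu l"
definition D where "D l x = (\<Sum>y\<in>UNIV. K x y * V l y)"
definition U where "U l x = mu x / D l x"
definition A where "A l y = (\<Sum>x\<in>UNIV. K x y * U l x)"

lemma K_pos: "K x y > 0"
proof -
  have "0 < e * mu x * nu y" using e_pos mu_pos nu_pos by simp
  then show ?thesis using K_lo[of x y] by linarith
qed

lemma V_Suc: "V (Suc l) y = min (V l y) (nu y / A l y)"
  by (simp add: V_def A_def U_def D_def u_step_def v_step_def)

lemma V_0: "V 0 y = 1" by (simp add: V_def)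

lemma D_pos_gen: assumes "\<And>y. V l y > 0" shows "D l x > 0"
  unfolding D_def by (rule sum_pos) (auto intro: mult_pos_pos K_pos assms)

lemma V_pos: "0 < V l y \<and> V l y \<le> 1"
proof (induction l arbitrary: y)
  case 0 then show ?case by (simp add: V_0)
next
  case (Suc l)
  have D: "D l x > 0" for x using D_pos_gen Suc by blast
  have "U l x > 0" for x using D mu_pos by (simp add: U_def)
  then have "A l y > 0" unfolding A_def by (intro sum_pos) (auto intro: mult_pos_pos K_pos)
  then have "nu y / A l y > 0" using nu_pos by simp
  then show ?case using Suc[of y] by (auto simp add: V_Suc min_le_iff_disj)
qed

lemma D_pos: "D l x > 0" using D_pos_gen V_pos by blast
lemma U_pos: "U l x > 0" using D_pos mu_pos by (simp add: U_def)
lemma A_pos: "A l y > 0" unfolding A_def by (intro sum_pos) (auto intro: mult_pos_pos K_pos U_pos)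

lemma V_mono: "V (Suc l) y \<le> V l y" by (simp add: V_Suc)

lemma D_mono: "D (Suc l) x \<le> D l x"
  unfolding D_def by (intro sum_mono mult_left_mono V_mono) (auto intro: less_imp_le K_pos)

lemma U_mono: "U l x \<le> U (Suc l) x"
  unfolding U_def using D_mono[of l x] D_pos[of "Suc l" x] mu_pos[of x]
  by (simp add: frac_le less_imp_le)

lemma A_mono: "A l y \<le> A (Suc l) y"
  unfolding A_def by (intro sum_mono mult_left_mono U_mono) (auto intro: less_imp_le K_pos)

lemma V_closed: "V (Suc l) y = min 1 (nu y / A l y)"
proof (induction l)
  case 0 then show ?case by (simp add: V_Suc V_0)
next
  case (Suc l)
  have "nu y / A (Suc l) y \<le> nu y / A l y"
    using A_mono[of l y] A_pos[of l y] nu_pos[of y] by (simp add: frac_le less_imp_le)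
  then show ?case using Suc by (simp add: V_Suc[of "Suc l"])
qed

lemma VA_sum: "(\<Sum>y\<in>UNIV. V l y * A l y) = 1"
proof -
  have "(\<Sum>y\<in>UNIV. V l y * A l y) = (\<Sum>y\<in>UNIV. \<Sum>x\<in>UNIV. U l x * (K x y * V l y))"
    unfolding A_def by (simp add: sum_distrib_left sum_distrib_right mult_ac)
  also have "\<dots> = (\<Sum>x\<in>UNIV. U l x * D l x)"
    by (subst sum.swap) (simp add: D_def sum_distrib_left)
  also have "\<dots> = (\<Sum>x\<in>UNIV. mu x)"
  proof (rule sum.cong)
    fix x show "U l x * D l x = mu x" using D_pos[of l x] by (simp add: U_def)
  qed simp
  finally show ?thesis using mu_sum by simp
qed

lemma exists_small: "\<exists>y. A l y \<le> nu y"
proof (induction l)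
  case 0
  show ?case
  proof (rule ccontr)
    assume "\<not> ?thesis"
    then have "\<forall>y. nu y < A 0 y" using not_le by blast
    then have "(\<Sum>y\<in>UNIV. nu y) < (\<Sum>y\<in>UNIV. V 0 y * A 0 y)"
      by (intro sum_strict_mono) (auto simp: V_0)
    then show False using VA_sum nu_sum by simp
  qed
next
  case (Suc l)
  then obtain y0 where y0: "A l y0 \<le> nu y0" by blast
  show ?case
  proof (rule ccontr)
    assume "\<not> ?thesis"
    then have big: "\<forall>y. nu y < A (Suc l) y" using not_le by blast
    have ge: "nu y \<le> V (Suc l) y * A (Suc l) y" for y
    proof -
      have a: "nu y \<le> nu y / A l y * A (Suc l) y"
        using A_mono[of l y] A_pos[of l y] nu_pos[of y]
        by (simp add: field_simps less_imp_le)
      show ?thesis using big a unfolding V_closed by (auto simp: min_def less_imp_le)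
    qed
    have gt: "nu y0 < V (Suc l) y0 * A (Suc l) y0"
    proof -
      have "nu y0 / A l y0 \<ge> 1" using y0 A_pos[of l y0] by simp
      then have "V (Suc l) y0 = 1" by (simp add: V_closed)
      then show ?thesis using big by simp
    qed
    have "(\<Sum>y\<in>UNIV. nu y) < (\<Sum>y\<in>UNIV. V (Suc l) y * A (Suc l) y)"
      by (rule sum_strict_mono_ex1) (use ge gt in auto)
    then show False using VA_sum nu_sum by simp
  qed
qed

definition S where "S l = (\<Sum>x\<in>UNIV. U l x * mu x)"

lemma S_pos: "S l > 0" unfolding S_def by (intro sum_pos) (auto intro: mult_pos_pos U_pos mu_pos)

lemma S_bound: "S l \<le> 1 / e"
proof -
  obtain y where y: "A l y \<le> nu y" using exists_small by blast
  have "e * nu y * S l = (\<Sum>x\<in>UNIV. (e * mu x * nu y) * U l x)"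
    by (simp add: S_def sum_distrib_left mult_ac)
  also have "\<dots> \<le> A l y" unfolding A_def
    by (intro sum_mono mult_right_mono K_lo) (auto intro: less_imp_le U_pos)
  finally have "e * nu y * S l \<le> nu y" using y by linarith
  then have "e * S l \<le> 1" using nu_pos[of y] by (simp add: mult_ac)
  then show ?thesis using e_pos by (simp add: field_simps)
qed


lemma async_u_Suc: "async_u K mu nu (Suc m) x = U m x"
  by (simp add: async_u_def u_step_def U_def D_def V_def)

definition q where "q l = async_q K mu nu l"

lemma q_Suc: "q (Suc m) = (\<Sum>x\<in>UNIV. mu x * (U m x / U (Suc m) x))"
proof -
  have "q (Suc m) = (\<Sum>x\<in>UNIV. U m x * D (Suc m) x)"
    unfolding q_def async_q_def async_u_Suc D_def
    by (simp add: sum_distrib_left mult_ac V_def)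
  also have "\<dots> = (\<Sum>x\<in>UNIV. mu x * (U m x / U (Suc m) x))"
  proof (rule sum.cong)
    fix x
    show "U m x * D (Suc m) x = mu x * (U m x / U (Suc m) x)"
      using D_pos[of m x] D_pos[of "Suc m" x] mu_pos[of x] by (simp add: U_def field_simps)
  qed simp
  finally show ?thesis .
qed

definition P where "P m = (\<Sum>x\<in>UNIV. mu x * ln (U m x))"

lemma P_step: "P m + (1 - q (Suc m)) \<le> P (Suc m)"
proof -
  have t: "mu x * (1 - U m x / U (Suc m) x) \<le> mu x * ln (U (Suc m) x) - mu x * ln (U m x)" for x
  proof -
    have "ln (U m x / U (Suc m) x) \<le> U m x / U (Suc m) x - 1"
      by (rule ln_le_minus_one) (simp add: U_pos)
    then have "1 - U m x / U (Suc m) x \<le> ln (U (Suc m) x) - ln (U m x)"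
      using U_pos[of m x] U_pos[of "Suc m" x] by (simp add: ln_div)
    then show ?thesis using mu_pos[of x]
      by (metis less_imp_le mult_left_mono right_diff_distrib)
  qed
  have "1 - q (Suc m) = (\<Sum>x\<in>UNIV. mu x * (1 - U m x / U (Suc m) x))"
    by (simp add: q_Suc right_diff_distrib sum_subtractf mu_sum)
  also have "\<dots> \<le> (\<Sum>x\<in>UNIV. mu x * ln (U (Suc m) x) - mu x * ln (U m x))"
    by (rule sum_mono) (rule t)
  also have "\<dots> = P (Suc m) - P m" by (simp add: P_def sum_subtractf)
  finally show ?thesis by simp
qed

lemma P_0: "P 0 \<ge> 0"
proof -
  have "U 0 x \<ge> 1" for x
  proof -
    have "D 0 x \<le> (\<Sum>y\<in>UNIV. mu x * nu y)"
      unfolding D_def by (intro sum_mono) (simp add: V_0 K_hi)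
    also have "\<dots> = mu x" by (simp add: sum_distrib_left[symmetric] nu_sum)
    finally show ?thesis using D_pos[of 0 x] by (simp add: U_def)
  qed
  then show ?thesis unfolding P_def
    by (intro sum_nonneg mult_nonneg_nonneg) (auto intro: less_imp_le mu_pos)
qed

lemma P_le: "P m \<le> ln (1 / e)"
proof -
  have t: "mu x * ln (U m x) \<le> mu x * (ln (S m) + U m x / S m - 1)" for x
  proof -
    have "ln (U m x / S m) \<le> U m x / S m - 1"
      by (rule ln_le_minus_one) (simp add: U_pos S_pos)
    then have "ln (U m x) \<le> ln (S m) + U m x / S m - 1"
      using U_pos[of m x] S_pos[of m] by (simp add: ln_div)
    then show ?thesis using mu_pos[of x] by (simp add: less_imp_le mult_left_mono)
  qed
  have "P m \<le> (\<Sum>x\<in>UNIV. mu x * (ln (S m) + U m x / S m - 1))"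
    unfolding P_def by (rule sum_mono) (rule t)
  also have "\<dots> = ln (S m) * (\<Sum>x\<in>UNIV. mu x) + (\<Sum>x\<in>UNIV. U m x * mu x) / S m - (\<Sum>x\<in>UNIV. mu x)"
    by (simp add: algebra_simps sum.distrib sum_subtractf sum_distrib_left sum_divide_distrib sum_distrib_right)
  also have "\<dots> = ln (S m)" using S_pos[of m] by (simp add: mu_sum S_def[symmetric])
  also have "\<dots> \<le> ln (1 / e)" using S_bound[of m] S_pos[of m] by (rule ln_mono)
  finally show ?thesis .
qed

lemma e_le1: "e \<le> 1"
proof -
  obtain x :: 'x where True by blast
  obtain y :: 'y where True by blast
  have "e * (mu x * nu y) \<le> 1 * (mu x * nu y)" using K_lo[of x y] K_hi[of x y] by (simp add: mult_ac)
  then show ?thesis using mu_pos[of x] nu_pos[of y] by simp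
qed

lemma main_q:
  assumes qt: "qt < 1"
  shows "\<exists>n::nat. 1 \<le> n \<and> real n \<le> 1 + ln (1 / e) / (1 - qt) \<and> q n \<ge> qt"
proof (rule ccontr)
  assume H: "\<not> ?thesis"
  define L where "L = ln (1 / e)"
  have L0: "L \<ge> 0" using e_pos e_le1 by (simp add: L_def)
  define N where "N = nat \<lfloor>L / (1 - qt)\<rfloor> + 1"
  have a: "real N \<le> 1 + L / (1 - qt)" using L0 qt unfolding N_def
    by (simp add: of_nat_nat)
  have b: "L / (1 - qt) < real N" using L0 qt unfolding N_def
    by (simp add: of_nat_nat) linarith
  have ind: "m \<le> N \<Longrightarrow> real m * (1 - qt) \<le> P m" for m
  proof (induction m)
    case 0 then show ?case using P_0 by simp
  next
    case (Suc m)
    have "real (Suc m) \<le> real N" using Suc.prems by (simp only: of_nat_le_iff)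
    then have r: "real (Suc m) \<le> 1 + ln (1 / e) / (1 - qt)" using a unfolding L_def by linarith
    have "\<not> (1 \<le> Suc m \<and> real (Suc m) \<le> 1 + ln (1 / e) / (1 - qt) \<and> qt \<le> q (Suc m))"
      using H by blast
    then have "q (Suc m) < qt" using r by auto
    then show ?case using Suc P_step[of m] by (simp add: algebra_simps)
  qed
  have "real N * (1 - qt) \<le> L" using ind[of N] P_le[of N] by (simp add: L_def)
  moreover have "L < real N * (1 - qt)" using b qt by (simp add: field_simps)
  ultimately show False by simp
qed

end

theorem mainTheorem4:
  fixes mu :: "'x::finite \<Rightarrow> real" and nu :: "'y::finite \<Rightarrow> real"
    and c :: "'x \<Rightarrow> 'y \<Rightarrow> real" and eps q_target :: real
  assumes mu_pos: "\<And>x. mu x > 0" and mu_sum: "(\<Sum>x\<in>UNIV. mu x) = 1"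
    and nu_pos: "\<And>y. nu y > 0" and nu_sum: "(\<Sum>y\<in>UNIV. nu y) = 1"
    and c_nonneg: "\<And>x y. c x y \<ge> 0"
    and eps_pos: "eps > 0"
    and q_lo: "0 < q_target" and q_hi: "q_target < 1"
  shows "let K = sk_kernel eps c mu nu; C = Max {c x y | x y. True} in
     (\<exists>n::nat. 1 \<le> n \<and> real n \<le> 2 + C / (eps * (1 - q_target)) \<and> async_q K mu nu n \<ge> q_target)
     \<and> (\<forall>l::nat. 1 \<le> l \<longrightarrow> (\<Sum>x\<in>UNIV. async_u K mu nu l x * mu x) \<le> exp (C / eps))"
proof -
  define K where "K = sk_kernel eps c mu nu"
  define C where "C = Max {c x y | x y. True}"
  have fin: "finite {c x y | x y. True}"
  proof -
    have "{c x y | x y. True} = (\<lambda>(x,y). c x y) ` UNIV" by auto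
    then show ?thesis by simp
  qed
  have cC: "c x y \<le> C" for x y unfolding C_def by (rule Max_ge[OF fin]) auto
  define e where "e = exp (- C / eps)"
  interpret sk K mu nu e
  proof
    show "0 < e" by (simp add: e_def)
    fix x y
    have "- C / eps \<le> - c x y / eps" using cC[of x y] eps_pos by (simp add: divide_right_mono)
    then have "e \<le> exp (- c x y / eps)" unfolding e_def by simp
    then show "e * mu x * nu y \<le> K x y" unfolding K_def sk_kernel_def
      using mu_pos[of x] nu_pos[of y] by (simp add: mult_right_mono less_imp_le)
    have "exp (- c x y / eps) \<le> 1" using c_nonneg[of x y] eps_pos by simp
    then show "K x y \<le> mu x * nu y" unfolding K_def sk_kernel_def
      using mu_pos[of x] nu_pos[of y]
      by (metis mult.assoc mult_left_le_one_le mult_pos_pos less_imp_le exp_ge_zero)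
  qed (use mu_pos mu_sum nu_pos nu_sum in auto)
  have lnE: "ln (1 / e) = C / eps" by (simp add: e_def ln_div)
  have invE: "1 / e = exp (C / eps)" by (simp add: e_def exp_minus field_simps)
  obtain n :: nat where n: "1 \<le> n" "real n \<le> 1 + ln (1 / e) / (1 - q_target)" "q n \<ge> q_target"
    using main_q[OF q_hi] by blast
  have "ln (1 / e) / (1 - q_target) = C / (eps * (1 - q_target))" using lnE by simp
  then have P1: "\<exists>n::nat. 1 \<le> n \<and> real n \<le> 2 + C / (eps * (1 - q_target)) \<and> async_q K mu nu n \<ge> q_target"
    using n unfolding q_def by (intro exI[of _ n]) auto
  have P2: "\<forall>l::nat. 1 \<le> l \<longrightarrow> (\<Sum>x\<in>UNIV. async_u K mu nu l x * mu x) \<le> exp (C / eps)"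
  proof (intro allI impI)
    fix l :: nat assume "1 \<le> l"
    then obtain m where m: "l = Suc m" by (cases l) auto
    have "(\<Sum>x\<in>UNIV. async_u K mu nu l x * mu x) = S m" by (simp add: m async_u_Suc S_def)
    then show "(\<Sum>x\<in>UNIV. async_u K mu nu l x * mu x) \<le> exp (C / eps)"
      using S_bound[of m] invE by simp
  qed
  show ?thesis using P1 P2 unfolding Let_def K_def C_def by blast
qed

end
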